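(* Let $R$ be a commutative Noetherian ring with unity. Any two distinct associated primes of $R$ (viewed as vertices of $\Gamma_E(R)$) are joined by an edge in $\Gamma_E(R)$. Furthermore, every vertex $[v]$ of $\Gamma_E(R)$ is either an associated prime or is adjacent to a vertex $[z]$ such that $\operatorname{ann}(z)$ is an associated prime which is a maximal element of $\mathfrak F=\{\operatorname{ann}(x)\mid 0\neq x\in R\}$.
   Context: For $x,y\in R$ write $x\sim y$ iff $\operatorname{ann}(x)=\operatorname{ann}(y)$; this is an equivalence relation, $[x]$ denotes the class of $x$, and $[x]\cdot[y]=[xy]$ is well defined. Let $Z^*(R)$ be the set of nonzero zero divisors of $R$. The graph $\Gamma_E(R)$ is the simple graph whose vertices are the classes $[x]$ with $x\in Z^*(R)$, two distinct vertices $[x],[y]$ being adjacent iff $xy=0$. A prime ideal $\mathfrak p$ is an associated prime of $R$ if $\mathfrak p=\operatorname{ann}(y)$ for some $y\in R$; the map $\mathfrak p=\operatorname{ann}(y)\mapsto[y]$ injects the set $\operatorname{Ass}(R)$ of associated primes into the vertex set, and a vertex $[y]$ is called an associated prime if $\operatorname{ann}(y)$ is a prime ideal. *)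

theory Defs
  imports "HOL-Algebra.Algebra"
begin

definition ann :: "('a, 'b) ring_scheme \<Rightarrow> 'a \<Rightarrow> 'a set" where
  "ann R x = {y \<in> carrier R. x \<otimes>\<^bsub>R\<^esub> y = \<zero>\<^bsub>R\<^esub>}"

definition zdiv_star :: "('a, 'b) ring_scheme \<Rightarrow> 'a set" where
  "zdiv_star R = {x \<in> carrier R. x \<noteq> \<zero>\<^bsub>R\<^esub> \<and>
      (\<exists>y \<in> carrier R. y \<noteq> \<zero>\<^bsub>R\<^esub> \<and> x \<otimes>\<^bsub>R\<^esub> y = \<zero>\<^bsub>R\<^esub>)}"

definition ann_class :: "('a, 'b) ring_scheme \<Rightarrow> 'a \<Rightarrow> 'a set" where
  "ann_class R x = {y \<in> carrier R. ann R y = ann R x}"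

definition GE_vertices :: "('a, 'b) ring_scheme \<Rightarrow> 'a set set" where
  "GE_vertices R = ann_class R ` zdiv_star R"

text \<open>Adjacency in Gamma_E(R): distinct vertices [x],[y] with xy = 0
  (independent of representatives).\<close>
definition GE_adj :: "('a, 'b) ring_scheme \<Rightarrow> 'a set \<Rightarrow> 'a set \<Rightarrow> bool" where
  "GE_adj R A B \<longleftrightarrow> A \<in> GE_vertices R \<and> B \<in> GE_vertices R \<and> A \<noteq> B \<and>
      (\<exists>x \<in> A. \<exists>y \<in> B. x \<otimes>\<^bsub>R\<^esub> y = \<zero>\<^bsub>R\<^esub>)"

definition annF :: "('a, 'b) ring_scheme \<Rightarrow> 'a set set" where
  "annF R = {ann R x | x. x \<in> carrier R \<and> x \<noteq> \<zero>\<^bsub>R\<^esub>}"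

definition maximal_in :: "'a set set \<Rightarrow> 'a set \<Rightarrow> bool" where
  "maximal_in F I \<longleftrightarrow> I \<in> F \<and> (\<forall>J \<in> F. I \<subseteq> J \<longrightarrow> J = I)"

end

theory Submission imports Defs begin

lemma (in cring) ann_ideal:
  assumes x: "x \<in> carrier R" shows "ideal (ann R x) R"
proof (rule idealI)
  show "ring R" by (rule ring_axioms)
  show "subgroup (ann R x) (add_monoid R)"
  proof
    show "ann R x \<subseteq> carrier (add_monoid R)" by (auto simp: ann_def)
    fix a b assume "a \<in> ann R x" "b \<in> ann R x"
    then show "a \<otimes>\<^bsub>add_monoid R\<^esub> b \<in> ann R x"
      using x by (auto simp: ann_def r_distr)
  next
    show "\<one>\<^bsub>add_monoid R\<^esub> \<in> ann R x" using x by (auto simp: ann_def)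
  next
    fix a assume "a \<in> ann R x"
    then show "inv\<^bsub>add_monoid R\<^esub> a \<in> ann R x"
      using x by (auto simp: ann_def a_inv_def[symmetric] r_minus)
  qed
next
  fix a y assume "a \<in> ann R x" "y \<in> carrier R"
  then show "y \<otimes> a \<in> ann R x" using x
    by (auto simp: ann_def) (metis m_lcomm r_null)
next
  fix a y assume "a \<in> ann R x" "y \<in> carrier R"
  then show "a \<otimes> y \<in> ann R x" using x
    by (auto simp: ann_def) (metis m_assoc l_null)
qed

lemma (in cring) ann_zero_iff:
  assumes x: "x \<in> carrier R" shows "\<one> \<in> ann R x \<longleftrightarrow> x = \<zero>"
  using x by (auto simp: ann_def)

lemma (in cring) ann_mult:
  assumes "x \<in> carrier R" "a \<in> carrier R" shows "ann R x \<subseteq> ann R (a \<otimes> x)"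
  using assms by (auto simp: ann_def) (metis m_assoc m_comm r_null m_closed)

lemma (in cring) ann_mult_prime:
  assumes x: "x \<in> carrier R" and a: "a \<in> carrier R" and P: "primeideal (ann R x) R"
    and na: "a \<notin> ann R x"
  shows "ann R (a \<otimes> x) = ann R x"
proof
  show "ann R x \<subseteq> ann R (a \<otimes> x)" by (rule ann_mult[OF x a])
  show "ann R (a \<otimes> x) \<subseteq> ann R x"
  proof
    fix b assume b: "b \<in> ann R (a \<otimes> x)"
    then have bc: "b \<in> carrier R" "a \<otimes> x \<otimes> b = \<zero>" by (auto simp: ann_def)
    then have "a \<otimes> b \<in> ann R x" using x a
      by (auto simp: ann_def) (metis m_assoc m_comm m_lcomm)
    then show "b \<in> ann R x" using primeideal.I_prime[OF P a bc(1)] na by blast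
  qed
qed

lemma (in cring) maximal_prime:
  assumes z: "z \<in> carrier R" "z \<noteq> \<zero>" and M: "maximal_in (annF R) (ann R z)"
  shows "primeideal (ann R z) R"
proof (rule primeidealI[OF ann_ideal[OF z(1)] is_cring])
  show "carrier R \<noteq> ann R z" using ann_zero_iff[OF z(1)] z(2) by auto
  fix a b assume a: "a \<in> carrier R" and b: "b \<in> carrier R" and ab: "a \<otimes> b \<in> ann R z"
  show "a \<in> ann R z \<or> b \<in> ann R z"
  proof (rule disjCI)
    assume na: "b \<notin> ann R z"
    then have "b \<otimes> z \<noteq> \<zero>" using b z by (auto simp: ann_def m_comm)
    then have "ann R (b \<otimes> z) \<in> annF R" using b z by (auto simp: annF_def)
    then have eq: "ann R (b \<otimes> z) = ann R z"
      using M ann_mult[OF z(1) b] by (auto simp: maximal_in_def)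
    have "a \<in> ann R (b \<otimes> z)" using ab a b z
      by (auto simp: ann_def) (metis m_assoc m_comm m_lcomm)
    then show "a \<in> ann R z" using eq by simp
  qed
qed

lemma exists_maximal:
  assumes cr: "cring R" and nr: "noetherian_ring R" and I0: "I0 \<in> annF R"
  shows "\<exists>M. maximal_in (annF R) M \<and> I0 \<subseteq> M"
proof -
  define S where "S = {J \<in> annF R. I0 \<subseteq> J}"
  have "\<exists>M\<in> S. \<forall>Y\<in> S. M \<subseteq> Y \<longrightarrow> Y = M"
  proof (rule subset_Zorn)
    fix C assume C: "subset.chain S C"
    show "\<exists>U\<in> S. \<forall>Y\<in>C. Y \<subseteq> U"
    proof (cases "C = {}")
      case True then show ?thesis using I0 by (auto simp: S_def)
    next
      case False
      have "S \<subseteq> {I. ideal I R}"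
        using cr by (auto simp: S_def annF_def intro: cring.ann_ideal)
      hence "subset.chain {I. ideal I R} C"
        using C unfolding pred_on.chain_def by auto
      then have "\<Union>C \<in> C"
        using noetherian_ring.ideal_chain_is_trivial[OF nr] False by simp
      thus ?thesis
        by (meson C Union_upper pred_on.chain_def subsetCE)
    qed
  qed
  then obtain M where "M \<in> S" "\<forall>Y\<in> S. M \<subseteq> Y \<longrightarrow> Y = M" by blast
  then show ?thesis unfolding maximal_in_def S_def by blast
qed

lemma (in cring) prime_pair:
  assumes y: "y \<in> carrier R" and z: "z \<in> carrier R"
    and Py: "primeideal (ann R y) R" and Pz: "primeideal (ann R z) R"
    and a: "a \<in> ann R y" "a \<notin> ann R z"
  shows "y \<otimes> z = \<zero> \<and> y \<in> zdiv_star R \<and> z \<in> zdiv_star R"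
proof -
  have ac: "a \<in> carrier R" "y \<otimes> a = \<zero>" using a(1) by (auto simp: ann_def)
  have "\<zero> \<in> ann R z" using z by (auto simp: ann_def)
  then have a0: "a \<noteq> \<zero>" using a(2) by auto
  have y0: "y \<noteq> \<zero>" using primeideal.I_notcarr[OF Py] ann_zero_iff[OF y] y
    by (auto simp: ann_def)
  have z0: "z \<noteq> \<zero>" using primeideal.I_notcarr[OF Pz] ann_zero_iff[OF z] z
    by (auto simp: ann_def)
  have "a \<otimes> y \<in> ann R z" using ac y z by (auto simp: ann_def m_comm)
  then have "y \<in> ann R z" using primeideal.I_prime[OF Pz ac(1) y] a(2) by blast
  then have zy: "z \<otimes> y = \<zero>" by (auto simp: ann_def)
  then have "y \<otimes> z = \<zero>" using y z by (simp add: m_comm)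
  moreover have "y \<in> zdiv_star R" using y y0 ac a0 by (auto simp: zdiv_star_def)
  moreover have "z \<in> zdiv_star R" using z z0 y y0 zy by (auto simp: zdiv_star_def)
  ultimately show ?thesis by blast
qed

lemma ann_class_self: "x \<in> carrier R \<Longrightarrow> x \<in> ann_class R x"
  by (simp add: ann_class_def)

lemma adj_intro:
  assumes "y \<in> zdiv_star R" "z \<in> zdiv_star R" "ann R y \<noteq> ann R z"
    "y \<otimes>\<^bsub>R\<^esub> z = \<zero>\<^bsub>R\<^esub>"
  shows "GE_adj R (ann_class R y) (ann_class R z)"
proof -
  have c: "y \<in> carrier R" "z \<in> carrier R" using assms by (auto simp: zdiv_star_def)
  have "ann_class R y \<noteq> ann_class R z"
  proof
    assume "ann_class R y = ann_class R z"
    then have "z \<in> ann_class R y" using ann_class_self[OF c(2)] by simp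
    then show False using assms(3) by (simp add: ann_class_def)
  qed
  then show ?thesis using assms ann_class_self[OF c(1)] ann_class_self[OF c(2)]
    by (auto simp: GE_adj_def GE_vertices_def)
qed

theorem lemma1p2:
  fixes R :: "('a, 'b) ring_scheme"
  assumes "cring R" and "noetherian_ring R"
  shows "(\<forall>y \<in> carrier R. \<forall>z \<in> carrier R.
            primeideal (ann R y) R \<and> primeideal (ann R z) R \<and> ann R y \<noteq> ann R z
            \<longrightarrow> GE_adj R (ann_class R y) (ann_class R z))
       \<and> (\<forall>v \<in> zdiv_star R.
            primeideal (ann R v) R \<or>
            (\<exists>z \<in> carrier R. GE_adj R (ann_class R v) (ann_class R z) \<and>
               primeideal (ann R z) R \<and> maximal_in (annF R) (ann R z)))"
proof -
  interpret cring R by fact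
  have P1: "GE_adj R (ann_class R y) (ann_class R z)"
    if y: "y \<in> carrier R" and z: "z \<in> carrier R" and Py: "primeideal (ann R y) R"
      and Pz: "primeideal (ann R z) R" and ne: "ann R y \<noteq> ann R z" for y z
  proof (cases "ann R y \<subseteq> ann R z")
    case False
    then obtain a where "a \<in> ann R y" "a \<notin> ann R z" by blast
    from prime_pair[OF y z Py Pz this] have h: "y \<otimes>\<^bsub>R\<^esub> z = \<zero>\<^bsub>R\<^esub>" "y \<in> zdiv_star R" "z \<in> zdiv_star R" by auto
    show ?thesis by (rule adj_intro[OF h(2) h(3) ne h(1)])
  next
    case True
    then obtain a where "a \<in> ann R z" "a \<notin> ann R y" using ne by blast
    from prime_pair[OF z y Pz Py this] have h: "z \<otimes>\<^bsub>R\<^esub> y = \<zero>\<^bsub>R\<^esub>" "z \<in> zdiv_star R" "y \<in> zdiv_star R" by auto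
    have "y \<otimes>\<^bsub>R\<^esub> z = \<zero>\<^bsub>R\<^esub>" using h(1) y z by (simp add: m_comm)
    then show ?thesis by (rule adj_intro[OF h(3) h(2) ne])
  qed
  have P2: "\<exists>z \<in> carrier R. GE_adj R (ann_class R v) (ann_class R z) \<and>
               primeideal (ann R z) R \<and> maximal_in (annF R) (ann R z)"
    if v: "v \<in> zdiv_star R" and np: "\<not> primeideal (ann R v) R" for v
  proof -
    obtain u where u: "u \<in> carrier R" "u \<noteq> \<zero>\<^bsub>R\<^esub>" "v \<otimes>\<^bsub>R\<^esub> u = \<zero>\<^bsub>R\<^esub>" and vc: "v \<in> carrier R" "v \<noteq> \<zero>\<^bsub>R\<^esub>"
      using v by (auto simp: zdiv_star_def)
    have "ann R u \<in> annF R" using u by (auto simp: annF_def)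
    then obtain M where M: "maximal_in (annF R) M" "ann R u \<subseteq> M"
      using exists_maximal[OF assms] by blast
    then obtain z where z: "z \<in> carrier R" "z \<noteq> \<zero>\<^bsub>R\<^esub>" "M = ann R z"
      by (auto simp: maximal_in_def annF_def)
    have Pz: "primeideal (ann R z) R" using maximal_prime[OF z(1) z(2)] z(3) M(1) by simp
    have "v \<in> ann R u" using u vc by (auto simp: ann_def m_comm)
    then have "v \<in> ann R z" using M(2) z(3) by blast
    then have zv: "z \<otimes>\<^bsub>R\<^esub> v = \<zero>\<^bsub>R\<^esub>" by (auto simp: ann_def)
    have vz: "v \<otimes>\<^bsub>R\<^esub> z = \<zero>\<^bsub>R\<^esub>" using zv z vc by (simp add: m_comm)
    have "z \<in> zdiv_star R" using z vc zv by (auto simp: zdiv_star_def)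
    moreover have "ann R v \<noteq> ann R z" using np Pz by auto
    ultimately have "GE_adj R (ann_class R v) (ann_class R z)"
      using adj_intro[OF v _ _ vz] by blast
    then show ?thesis using z(1) z(3) Pz M(1) by blast
  qed
  show ?thesis using P1 P2 by blast
qed

end
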